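(* Let $\mathcal{G}$ be a connected undirected network graph with a given set of monitor nodes, and let $\mathcal{B}$ be a biconnected component of $\mathcal{G}$ whose agents are $m'_1,\ldots,m'_{\kappa}$. Then the identifiability of the links of $\mathcal{B}$ does not depend on whether $m'_1,\ldots,m'_{\kappa}$ are monitors or not; that is, every link of $\mathcal{B}$ is identifiable with the given monitors if and only if it is identifiable when $m'_1,\ldots,m'_{\kappa}$ are (additionally) made monitors. The only exception is the link $m'_1m'_2$ (if it exists) in the case $\kappa=2$.
   Context: Network model: $\mathcal{G}=(V,L)$ is an undirected connected graph; each link $l\in L$ carries an unknown additive metric $w_l$. A subset of nodes are monitors; a measurement path is a simple path in $\mathcal{G}$ whose two end-points are distinct monitors, and its measurement is the sum of the metrics of its links. A link $l$ is identifiable if $w_l$ is uniquely determined by the measurements of all measurement paths (equivalently, any two metric assignments giving equal measurements on all measurement paths agree on $l$). A biconnected component of $\mathcal{G}$ is a maximal 2-vertex-connected subgraph (or a bridge). For a biconnected component $\mathcal{B}$, a node $v\in V(\mathcal{B})$ is an agent of $\mathcal{B}$ if $v$ is a monitor, or $v$ is a cut-vertex of $\mathcal{G}$ through which $\mathcal{B}$ is connected to a monitor lying outside $\mathcal{B}$ (i.e., removing $v$ separates $\mathcal{B}\setminus\{v\}$ from some monitor). *)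

theory Defs
  imports Complex_Main
begin

text \<open>Undirected simple graphs: vertex set V, edge set E of 2-element vertex sets.
  Links are edges; a link metric is a function w :: 'a set \<Rightarrow> real.\<close>

definition adj :: "'a set set \<Rightarrow> 'a \<Rightarrow> 'a \<Rightarrow> bool" where
  "adj E u v \<longleftrightarrow> {u, v} \<in> E"

definition graph_conn :: "'a set \<Rightarrow> 'a set set \<Rightarrow> bool" where
  "graph_conn V E \<longleftrightarrow> V \<noteq> {} \<and> (\<forall>u\<in>V. \<forall>v\<in>V. (adj E)\<^sup>*\<^sup>* u v)"

definition wf_graph :: "'a set \<Rightarrow> 'a set set \<Rightarrow> bool" where
  "wf_graph V E \<longleftrightarrow> finite V \<and> (\<forall>e\<in>E. \<exists>u v. u \<noteq> v \<and> u \<in> V \<and> v \<in> V \<and> e = {u, v})"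

definition del_vertex_edges :: "'a set set \<Rightarrow> 'a \<Rightarrow> 'a set set" where
  "del_vertex_edges E v = {e \<in> E. v \<notin> e}"

definition biconn_sub :: "'a set \<Rightarrow> 'a set set \<Rightarrow> 'a set \<Rightarrow> 'a set set \<Rightarrow> bool" where
  "biconn_sub V E VB EB \<longleftrightarrow> VB \<subseteq> V \<and> EB \<subseteq> E \<and> (\<forall>e\<in>EB. e \<subseteq> VB) \<and>
     ((card VB = 2 \<and> EB = {VB}) \<or>
      (card VB \<ge> 3 \<and> (\<forall>v\<in>VB. graph_conn (VB - {v}) (del_vertex_edges EB v))))"

definition biconn_comp :: "'a set \<Rightarrow> 'a set set \<Rightarrow> 'a set \<Rightarrow> 'a set set \<Rightarrow> bool" where
  "biconn_comp V E VB EB \<longleftrightarrow> biconn_sub V E VB EB \<and>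
     (\<forall>VB' EB'. biconn_sub V E VB' EB' \<and> VB \<subseteq> VB' \<and> EB \<subseteq> EB' \<longrightarrow> VB' = VB \<and> EB' = EB)"

text \<open>Agents of B w.r.t. monitor set M: monitors of B, and vertices v of B whose removal
  separates B - {v} from some monitor outside B (such v are necessarily cut-vertices of G).\<close>
definition agents :: "'a set \<Rightarrow> 'a set set \<Rightarrow> 'a set \<Rightarrow> 'a set \<Rightarrow> 'a set set \<Rightarrow> 'a set" where
  "agents V E M VB EB = {v \<in> VB. v \<in> M \<or>
     (\<exists>m \<in> M - VB. \<forall>u \<in> VB - {v}. \<not> (adj (del_vertex_edges E v))\<^sup>*\<^sup>* u m)}"

definition simple_path :: "'a set \<Rightarrow> 'a set set \<Rightarrow> 'a list \<Rightarrow> bool" where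
  "simple_path V E p \<longleftrightarrow> length p \<ge> 2 \<and> distinct p \<and> set p \<subseteq> V \<and>
     (\<forall>i. Suc i < length p \<longrightarrow> {p ! i, p ! Suc i} \<in> E)"

definition path_links :: "'a list \<Rightarrow> 'a set list" where
  "path_links p = map (\<lambda>(a, b). {a, b}) (zip p (tl p))"

definition measurement :: "('a set \<Rightarrow> real) \<Rightarrow> 'a list \<Rightarrow> real" where
  "measurement w p = sum_list (map w (path_links p))"

definition meas_path :: "'a set \<Rightarrow> 'a set set \<Rightarrow> 'a set \<Rightarrow> 'a list \<Rightarrow> bool" where
  "meas_path V E M p \<longleftrightarrow> simple_path V E p \<and> hd p \<in> M \<and> last p \<in> M \<and> hd p \<noteq> last p"

definition identifiable :: "'a set \<Rightarrow> 'a set set \<Rightarrow> 'a set \<Rightarrow> 'a set \<Rightarrow> bool" where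
  "identifiable V E M l \<longleftrightarrow>
     (\<forall>w1 w2 :: 'a set \<Rightarrow> real.
        (\<forall>p. meas_path V E M p \<longrightarrow> measurement w1 p = measurement w2 p) \<longrightarrow> w1 l = w2 l)"

end

theory Submission
  imports Defs
begin


definition epath :: "'a set set \<Rightarrow> 'a list \<Rightarrow> bool" where
  "epath F p \<longleftrightarrow> set (path_links p) \<subseteq> F"

lemma pl_Nil[simp]: "path_links [] = []" by (simp add: path_links_def)
lemma pl_single[simp]: "path_links [x] = []" by (simp add: path_links_def)
lemma pl_Cons2[simp]: "path_links (x # y # xs) = {x, y} # path_links (y # xs)"
  by (simp add: path_links_def)

lemma pl_Cons: "path_links (x # xs) = (if xs = [] then [] else {x, hd xs} # path_links xs)"
  by (cases xs) auto

lemma pl_append: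
  "xs \<noteq> [] \<Longrightarrow> ys \<noteq> [] \<Longrightarrow>
   path_links (xs @ ys) = path_links xs @ {last xs, hd ys} # path_links ys"
proof (induction xs)
  case Nil then show ?case by simp
next
  case (Cons x xs)
  show ?case
  proof (cases "xs = []")
    case True then show ?thesis using Cons.prems by (simp add: pl_Cons)
  next
    case False then show ?thesis using Cons.IH Cons.prems by (simp add: pl_Cons)
  qed
qed

lemma pl_rev: "path_links (rev xs) = rev (path_links xs)"
proof (induction xs)
  case Nil then show ?case by simp
next
  case (Cons x xs)
  show ?case
  proof (cases "xs = []")
    case True then show ?thesis by simp
  next
    case False
    then show ?thesis using Cons.IH
      by (simp add: pl_append pl_Cons last_rev insert_commute)
  qed
qed

lemma pl_join:
  "P \<noteq> [] \<Longrightarrow> Q \<noteq> [] \<Longrightarrow> last P = hd Q \<Longrightarrow>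
   path_links (butlast P @ Q) = path_links P @ path_links Q"
proof (cases "butlast P = []")
  case True
  assume "P \<noteq> []" "last P = hd Q"
  then obtain a where "P = [a]" using True by (cases P) (auto split: if_splits)
  then show ?thesis using True by simp
next
  case False
  assume a: "P \<noteq> []" "Q \<noteq> []" "last P = hd Q"
  have P: "P = butlast P @ [last P]" using a(1) by (metis append_butlast_last_id)
  have "path_links P = path_links (butlast P) @ [{last (butlast P), last P}]"
    by (subst P, subst pl_append) (use False in auto)
  then show ?thesis using a False by (simp add: pl_append)
qed

lemma pl_join2:
  "P \<noteq> [] \<Longrightarrow> Q \<noteq> [] \<Longrightarrow> last P = hd Q \<Longrightarrow>
   path_links (P @ tl Q) = path_links P @ path_links Q"
proof -
  assume a: "P \<noteq> []" "Q \<noteq> []" "last P = hd Q"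
  have "P @ tl Q = butlast P @ Q" using a
    by (metis append.assoc append_butlast_last_id append_Cons append_Nil list.collapse)
  then show ?thesis using pl_join[OF a] by simp
qed

lemma pl_subset_edge: "e \<in> set (path_links p) \<Longrightarrow> e \<subseteq> set p"
proof (induction p)
  case Nil then show ?case by simp
next
  case (Cons x xs) then show ?case
    by (cases xs) (auto simp: pl_Cons split: if_splits)
qed

lemma pl_cover: "x \<in> set p \<Longrightarrow> 2 \<le> length p \<Longrightarrow> \<exists>e\<in>set (path_links p). x \<in> e"
proof (induction p)
  case Nil then show ?case by simp
next
  case (Cons y ys)
  show ?case
  proof (cases ys)
    case Nil then show ?thesis using Cons.prems by simp
  next
    case (Cons z zs)
    show ?thesis
    proof (cases "x = y")
      case True then show ?thesis using Cons by simp
    next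
      case False
      then have "x \<in> set ys" using \<open>x \<in> set (y # ys)\<close> by simp
      show ?thesis
      proof (cases zs)
        case Nil then show ?thesis using \<open>x \<in> set ys\<close> Cons by auto
      next
        case (Cons w ws)
        then have "\<exists>e\<in>set (path_links ys). x \<in> e"
          using Cons.IH \<open>x \<in> set ys\<close> \<open>ys = z # zs\<close> by simp
        then show ?thesis using \<open>ys = z # zs\<close> by auto
      qed
    qed
  qed
qed

lemma pl_length: "length (path_links p) = length p - 1"
  by (simp add: path_links_def)

lemma pl_nth: "Suc i < length p \<Longrightarrow> path_links p ! i = {p ! i, p ! Suc i}"
  by (simp add: path_links_def nth_tl)

lemma simple_path_iff:
  "simple_path V E p \<longleftrightarrow> 2 \<le> length p \<and> distinct p \<and> set p \<subseteq> V \<and> epath E p"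
proof -
  have "(\<forall>i. Suc i < length p \<longrightarrow> {p ! i, p ! Suc i} \<in> E) \<longleftrightarrow> set (path_links p) \<subseteq> E"
  proof
    assume h: "\<forall>i. Suc i < length p \<longrightarrow> {p ! i, p ! Suc i} \<in> E"
    show "set (path_links p) \<subseteq> E"
    proof
      fix e assume "e \<in> set (path_links p)"
      then obtain i where "i < length (path_links p)" "e = path_links p ! i"
        by (auto simp: in_set_conv_nth)
      then show "e \<in> E" using h pl_nth[of i p] by (simp add: pl_length)
    qed
  next
    assume h: "set (path_links p) \<subseteq> E"
    show "\<forall>i. Suc i < length p \<longrightarrow> {p ! i, p ! Suc i} \<in> E"
    proof (intro allI impI)
      fix i assume "Suc i < length p"
      then have "path_links p ! i \<in> set (path_links p)" by (simp add: pl_length)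
      then show "{p ! i, p ! Suc i} \<in> E" using h pl_nth[OF \<open>Suc i < length p\<close>] by auto
    qed
  qed
  then show ?thesis by (auto simp: simple_path_def epath_def)
qed

lemma epath_Nil[simp]: "epath F []" by (simp add: epath_def)
lemma epath_single[simp]: "epath F [x]" by (simp add: epath_def)
lemma epath_Cons2[simp]: "epath F (x # y # xs) \<longleftrightarrow> {x, y} \<in> F \<and> epath F (y # xs)"
  by (simp add: epath_def)

lemma epath_append:
  "xs \<noteq> [] \<Longrightarrow> ys \<noteq> [] \<Longrightarrow>
   epath F (xs @ ys) \<longleftrightarrow> epath F xs \<and> {last xs, hd ys} \<in> F \<and> epath F ys"
  by (auto simp: epath_def pl_append)

lemma epath_rev[simp]: "epath F (rev p) \<longleftrightarrow> epath F p"
  by (simp add: epath_def pl_rev)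

lemma epath_mono: "epath F p \<Longrightarrow> F \<subseteq> G \<Longrightarrow> epath G p"
  by (auto simp: epath_def)

lemma pl_prefix: "set (path_links xs) \<subseteq> set (path_links (xs @ ys))"
  by (cases "xs = []"; cases "ys = []") (auto simp: pl_append)

lemma pl_suffix: "set (path_links ys) \<subseteq> set (path_links (xs @ ys))"
  by (cases "xs = []"; cases "ys = []") (auto simp: pl_append)

lemma epath_prefix: "epath F (xs @ ys) \<Longrightarrow> epath F xs"
  using pl_prefix by (auto simp: epath_def)

lemma epath_suffix: "epath F (xs @ ys) \<Longrightarrow> epath F ys"
  using pl_suffix by (auto simp: epath_def)

lemma epath_avoid: "epath F p \<Longrightarrow> v \<notin> set p \<Longrightarrow> epath (del_vertex_edges F v) p"
  using pl_subset_edge by (fastforce simp: epath_def del_vertex_edges_def)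

lemma adj_sym: "adj F u v = adj F v u"
  by (simp add: adj_def insert_commute)

lemma reach_sym: "(adj F)\<^sup>*\<^sup>* u v \<Longrightarrow> (adj F)\<^sup>*\<^sup>* v u"
proof (induction rule: rtranclp_induct)
  case base then show ?case by simp
next
  case (step y z)
  then have "adj F z y" using adj_sym by metis
  then show ?case using step.IH by (meson converse_rtranclp_into_rtranclp)
qed

lemma epath_reach: "epath F p \<Longrightarrow> p \<noteq> [] \<Longrightarrow> (adj F)\<^sup>*\<^sup>* (hd p) (last p)"
proof (induction p)
  case Nil then show ?case by simp
next
  case (Cons x xs)
  show ?case
  proof (cases xs)
    case Nil then show ?thesis by simp
  next
    case (Cons y ys)
    have "adj F x y" using Cons.prems \<open>xs = y # ys\<close> by (simp add: adj_def)
    moreover have "(adj F)\<^sup>*\<^sup>* y (last xs)" using Cons.prems Cons.IH \<open>xs = y # ys\<close> by simp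
    ultimately have "(adj F)\<^sup>*\<^sup>* x (last xs)" by (rule converse_rtranclp_into_rtranclp)
    then show ?thesis using \<open>xs = y # ys\<close> by simp
  qed
qed

lemma walk2path:
  "(adj F)\<^sup>*\<^sup>* u v \<Longrightarrow> \<exists>p. p \<noteq> [] \<and> hd p = u \<and> last p = v \<and> distinct p \<and> epath F p"
proof (induction rule: rtranclp_induct)
  case base then show ?case by (intro exI[of _ "[u]"]) simp
next
  case (step y z)
  then obtain p where p: "p \<noteq> []" "hd p = u" "last p = y" "distinct p" "epath F p" by blast
  show ?case
  proof (cases "z \<in> set p")
    case True
    then obtain as bs where ab: "p = as @ z # bs" by (meson split_list)
    have "hd (as @ [z]) = u" using p ab by (cases as) auto
    moreover have "epath F (as @ [z])" using p(5) ab epath_prefix[of F "as @ [z]" bs] by simp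
    moreover have "distinct (as @ [z])" using p(4) ab by simp
    ultimately show ?thesis by (intro exI[of _ "as @ [z]"]) simp
  next
    case False
    have "epath F (p @ [z])" using p step(2) by (simp add: epath_append adj_def)
    then show ?thesis using p False by (intro exI[of _ "p @ [z]"]) simp
  qed
qed

lemma reach_del_self: "(adj (del_vertex_edges F v))\<^sup>*\<^sup>* u v \<Longrightarrow> u = v"
  by (erule rtranclp.cases) (auto simp: adj_def del_vertex_edges_def)

lemma reach_mono: "(adj F)\<^sup>*\<^sup>* u v \<Longrightarrow> F \<subseteq> G \<Longrightarrow> (adj G)\<^sup>*\<^sup>* u v"
proof (induction rule: rtranclp_induct)
  case base then show ?case by simp
next
  case (step y z) then show ?case by (meson adj_def rtranclp.rtrancl_into_rtrancl subsetD)
qed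

lemma del_mono: "F \<subseteq> G \<Longrightarrow> del_vertex_edges F v \<subseteq> del_vertex_edges G v"
  by (auto simp: del_vertex_edges_def)

lemma measurement_append:
  "P \<noteq> [] \<Longrightarrow> Q \<noteq> [] \<Longrightarrow> last P = hd Q \<Longrightarrow>
   measurement w (butlast P @ Q) = measurement w P + measurement w Q"
  by (simp add: measurement_def pl_join)

lemma measurement_rev[simp]: "measurement w (rev p) = measurement w p"
  by (simp add: measurement_def pl_rev rev_map[symmetric] sum_list_rev)

lemma measurement_diff: "measurement (\<lambda>e. w1 e - w2 e) p = measurement w1 p - measurement w2 p"
  by (simp add: measurement_def sum_list_subtractf)

lemma measurement_cong: "(\<And>e. e \<in> set (path_links p) \<Longrightarrow> f e = g e) \<Longrightarrow> measurement f p = measurement g p"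
  unfolding measurement_def by (metis map_eq_conv)

lemma sum_list_zero_gen: "(\<And>e. e \<in> set xs \<Longrightarrow> f e = 0) \<Longrightarrow> sum_list (map f xs) = (0::real)"
  by (induction xs) auto

lemma sum_list_sum_gen: "sum_list (map (\<lambda>e. \<Sum>a\<in>A. g a e) xs) = (\<Sum>a\<in>A. sum_list (map (g a) xs)::real)"
  by (induction xs) (auto simp: sum.distrib)

lemma measurement_zero: "(\<And>e. e \<in> set (path_links p) \<Longrightarrow> f e = 0) \<Longrightarrow> measurement f p = 0"
  unfolding measurement_def by (rule sum_list_zero_gen)

lemma measurement_sum: "measurement (\<lambda>e. \<Sum>a\<in>A. g a e) p = (\<Sum>a\<in>A. measurement (g a) p)"
  unfolding measurement_def by (rule sum_list_sum_gen)

lemma measurement_hd: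
  assumes "distinct s" "2 \<le> length s"
  shows "measurement (\<lambda>e. if hd s \<in> e then c else 0) s = c"
proof -
  obtain x y t where s: "s = x # y # t" using assms(2)
    by (metis One_nat_def Suc_1 Suc_le_length_iff)
  have "measurement (\<lambda>e. if x \<in> e then c else 0) (y # t) = 0"
    using assms(1) s pl_subset_edge[of _ "y # t"]
    by (intro measurement_zero) auto
  then show ?thesis using s by (simp add: measurement_def)
qed

lemma measurement_last:
  assumes "distinct s" "2 \<le> length s"
  shows "measurement (\<lambda>e. if last s \<in> e then c else 0) s = c"
  using measurement_hd[of "rev s" c] assms by (simp add: hd_rev)

lemma measurement_notin:
  "a \<notin> set s \<Longrightarrow> measurement (\<lambda>e. if a \<in> e then c else 0) s = 0"
  using pl_subset_edge by (intro measurement_zero) force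



lemma graph_conn_mono: assumes "graph_conn S F" "F \<subseteq> G" shows "graph_conn S G"
  unfolding graph_conn_def
proof (intro conjI ballI)
  show "S \<noteq> {}" using assms(1) by (simp add: graph_conn_def)
  fix u v assume "u \<in> S" "v \<in> S"
  then have "(adj F)\<^sup>*\<^sup>* u v" using assms(1) by (simp add: graph_conn_def)
  then show "(adj G)\<^sup>*\<^sup>* u v" using reach_mono assms(2) by metis
qed

lemma anchor_conn:
  assumes "S \<noteq> {}" "\<forall>u\<in>S. \<exists>t\<in>T. (adj F)\<^sup>*\<^sup>* u t" "\<forall>t1\<in>T. \<forall>t2\<in>T. (adj F)\<^sup>*\<^sup>* t1 t2"
  shows "graph_conn S F"
  unfolding graph_conn_def
proof (intro conjI ballI)
  show "S \<noteq> {}" by fact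
  fix u w assume "u \<in> S" "w \<in> S"
  then obtain t1 t2 where "t1 \<in> T" "t2 \<in> T" "(adj F)\<^sup>*\<^sup>* u t1" "(adj F)\<^sup>*\<^sup>* w t2" using assms by blast
  then have "(adj F)\<^sup>*\<^sup>* u t2" using assms(3) rtranclp_trans by metis
  moreover have "(adj F)\<^sup>*\<^sup>* t2 w" using reach_sym \<open>(adj F)\<^sup>*\<^sup>* w t2\<close> by metis
  ultimately show "(adj F)\<^sup>*\<^sup>* u w" by (rule rtranclp_trans)
qed

lemma QR:
  assumes "distinct q" "u \<in> set q" "u \<noteq> v"
  shows "((adj (del_vertex_edges (set (path_links q)) v))\<^sup>*\<^sup>* u (hd q) \<and> hd q \<noteq> v) \<or>
         ((adj (del_vertex_edges (set (path_links q)) v))\<^sup>*\<^sup>* u (last q) \<and> last q \<noteq> v)"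
proof -
  obtain as bs where q: "q = as @ u # bs" using assms(2) by (meson split_list)
  have ep: "epath (set (path_links q)) q" by (simp add: epath_def)
  show ?thesis
  proof (cases "v \<in> set as")
    case True
    then have "v \<notin> set (u # bs)" using assms(1) q by auto
    moreover have "epath (set (path_links q)) (u # bs)" using ep q epath_suffix by metis
    ultimately have "epath (del_vertex_edges (set (path_links q)) v) (u # bs)" by (rule epath_avoid[rotated])
    then have "(adj (del_vertex_edges (set (path_links q)) v))\<^sup>*\<^sup>* u (last (u # bs))"
      using epath_reach by fastforce
    moreover have "last (u # bs) = last q" "last q \<noteq> v" using q \<open>v \<notin> set (u # bs)\<close>
      by auto
    ultimately show ?thesis by simp
  next
    case False
    then have nv: "v \<notin> set (as @ [u])" using assms(3) by auto
    moreover have "epath (set (path_links q)) (as @ [u])" using ep q epath_prefix[of _ "as @ [u]" bs] by simp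
    ultimately have "epath (del_vertex_edges (set (path_links q)) v) (as @ [u])" by (rule epath_avoid[rotated])
    then have "(adj (del_vertex_edges (set (path_links q)) v))\<^sup>*\<^sup>* (hd (as @ [u])) u"
      using epath_reach by fastforce
    moreover have "hd (as @ [u]) = hd q" using q by (cases as) auto
    moreover have "hd q \<noteq> v" using nv q by (cases as) auto
    ultimately show ?thesis using reach_sym by metis
  qed
qed

locale setting =
  fixes V :: "'a set" and E :: "'a set set" and M :: "'a set"
    and VB :: "'a set" and EB :: "'a set set"
  assumes wf: "wf_graph V E"
    and conn: "graph_conn V E"
    and MV: "M \<subseteq> V"
    and bc: "biconn_comp V E VB EB"
begin

abbreviation "A \<equiv> agents V E M VB EB"

definition "Eext = {e \<in> E. \<not> e \<subseteq> VB}"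

lemma finV: "finite V" using wf by (simp add: wf_graph_def)

lemma edge_form: "e \<in> E \<Longrightarrow> \<exists>u v. u \<noteq> v \<and> u \<in> V \<and> v \<in> V \<and> e = {u, v}"
  using wf by (simp add: wf_graph_def)

lemma bs: "biconn_sub V E VB EB" using bc by (simp add: biconn_comp_def)

lemma VB_V: "VB \<subseteq> V" and EB_E: "EB \<subseteq> E" and EB_VB: "\<And>e. e \<in> EB \<Longrightarrow> e \<subseteq> VB"
  using bs by (auto simp: biconn_sub_def)

lemma finVB: "finite VB" using VB_V finV finite_subset by blast

lemma branches: "(card VB = 2 \<and> EB = {VB}) \<or>
   (card VB \<ge> 3 \<and> (\<forall>v\<in>VB. graph_conn (VB - {v}) (del_vertex_edges EB v)))"
  using bs by (simp add: biconn_sub_def)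

lemma cardVB: "card VB \<ge> 2" using branches by auto

lemma maximal: "biconn_sub V E VB' EB' \<Longrightarrow> VB \<subseteq> VB' \<Longrightarrow> EB \<subseteq> EB' \<Longrightarrow> VB' = VB \<and> EB' = EB"
  using bc by (simp add: biconn_comp_def)

lemma A_VB: "A \<subseteq> VB" by (auto simp: agents_def)
lemma MVB_A: "M \<inter> VB \<subseteq> A" by (auto simp: agents_def)
lemma finA: "finite A" using A_VB finVB finite_subset by blast

lemma Eext_E: "Eext \<subseteq> E" by (auto simp: Eext_def)

lemma epath_V: "epath E p \<Longrightarrow> 2 \<le> length p \<Longrightarrow> set p \<subseteq> V"
proof
  fix x assume "epath E p" "2 \<le> length p" "x \<in> set p"
  then obtain e where "e \<in> set (path_links p)" "x \<in> e" using pl_cover by metis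
  then show "x \<in> V" using \<open>epath E p\<close> edge_form by (auto simp: epath_def)
qed

lemma edge_distinct: "{u, v} \<in> E \<Longrightarrow> u \<noteq> v"
proof
  assume "{u, v} \<in> E" "u = v"
  then obtain a b where "a \<noteq> b" "{u} = {a, b}" using edge_form by fastforce
  then show False by (metis insert_iff singletonD)
qed

lemma chord: assumes "e \<in> E" "e \<subseteq> VB" shows "e \<in> EB"
proof (cases "card VB = 2 \<and> EB = {VB}")
  case True
  obtain u v where "u \<noteq> v" "e = {u, v}" using edge_form assms(1) by blast
  then have "card e = 2" by simp
  then have "e = VB" using True assms(2) finVB by (metis card_subset_eq)
  then show ?thesis using True by simp
next
  case False
  then have b2: "card VB \<ge> 3" "\<forall>v\<in>VB. graph_conn (VB - {v}) (del_vertex_edges EB v)"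
    using branches by auto
  have "biconn_sub V E VB (insert e EB)"
    unfolding biconn_sub_def
  proof (intro conjI disjI2)
    show "VB \<subseteq> V" by (rule VB_V)
    show "insert e EB \<subseteq> E" using EB_E assms by auto
    show "\<forall>e\<in>insert e EB. e \<subseteq> VB" using EB_VB assms by auto
    show "3 \<le> card VB" by fact
    show "\<forall>v\<in>VB. graph_conn (VB - {v}) (del_vertex_edges (insert e EB) v)"
      using b2(2) graph_conn_mono del_mono[of EB "insert e EB"] by blast
  qed
  then have "insert e EB = EB" using maximal by blast
  then show ?thesis by blast
qed

lemma nonEB_ext: "e \<in> E \<Longrightarrow> e \<notin> EB \<Longrightarrow> e \<in> Eext"
  using chord by (auto simp: Eext_def)

lemma Bconn: assumes "u \<in> VB" "w \<in> VB" shows "(adj EB)\<^sup>*\<^sup>* u w"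
proof (cases "card VB = 2 \<and> EB = {VB}")
  case True
  show ?thesis
  proof (cases "u = w")
    case True then show ?thesis by simp
  next
    case False
    have s: "{u, w} \<subseteq> VB" using assms by auto
    moreover have "card {u, w} = 2" using False by simp
    ultimately have "{u, w} = VB" using True card_subset_eq[OF finVB s] by simp
    then have "adj EB u w" using True by (simp add: adj_def)
    then show ?thesis by simp
  qed
next
  case False
  then have b2: "card VB \<ge> 3" "\<forall>v\<in>VB. graph_conn (VB - {v}) (del_vertex_edges EB v)"
    using branches by auto
  have s: "{u, w} \<subseteq> VB" using assms by auto
  have c2: "card {u, w} \<le> 2" by (cases "u = w") auto
  have "card (VB - {u, w}) = card VB - card {u, w}"
    by (rule card_Diff_subset) (use s in auto)
  then have "card (VB - {u, w}) \<ge> 1" using b2(1) c2 by linarith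
  then have "VB - {u, w} \<noteq> {}" by (intro notI) simp
  then obtain z where "z \<in> VB" "z \<noteq> u" "z \<noteq> w" by blast
  then have "(adj (del_vertex_edges EB z))\<^sup>*\<^sup>* u w" using b2(2) assms by (auto simp: graph_conn_def)
  moreover have "del_vertex_edges EB z \<subseteq> EB" by (auto simp: del_vertex_edges_def)
  ultimately show ?thesis using reach_mono by metis
qed

lemma del_reach:
  assumes "v \<in> VB" "t1 \<in> VB - {v}" "t2 \<in> VB - {v}"
  shows "(adj (del_vertex_edges EB v))\<^sup>*\<^sup>* t1 t2"
proof (cases "card VB = 2 \<and> EB = {VB}")
  case True
  then have "card (VB - {v}) = 1" using card_Diff_singleton[OF assms(1)] by simp
  then obtain a where a: "VB - {v} = {a}" by (rule card_1_singletonE)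
  have "t1 \<in> {a}" "t2 \<in> {a}" using assms(2,3) unfolding a by simp_all
  then have "t1 = t2" by simp
  then show ?thesis by (simp only: rtranclp.rtrancl_refl)
next
  case False
  then have "graph_conn (VB - {v}) (del_vertex_edges EB v)" using branches assms(1) by blast
  then show ?thesis using assms(2,3) unfolding graph_conn_def by blast
qed

lemma no_ext_reach:
  assumes "x \<in> VB" "y \<in> VB" "x \<noteq> y" "(adj Eext)\<^sup>*\<^sup>* x y"
  shows False
proof -
  obtain p where p: "p \<noteq> []" "hd p = x" "last p = y" "distinct p" "epath Eext p"
    using walk2path[OF assms(4)] by blast
  obtain rest where pr: "p = x # rest" using p(1,2) by (cases p) auto
  have "rest \<noteq> []" using pr p(3) assms(3) by auto
  then have "last rest \<in> set rest" "last rest = y" using pr p(3) by auto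
  then have "\<exists>z\<in>set rest. z \<in> VB" using assms(2) by auto
  then obtain as y' bs where r: "rest = as @ y' # bs" "y' \<in> VB" "\<forall>a\<in>set as. a \<notin> VB"
    by (rule split_list_first_propE)
  define q where "q = x # as @ [y']"
  have pq: "p = q @ bs" using pr r by (simp add: q_def)
  have epq: "epath Eext q" using p(5) pq epath_prefix by metis
  have dq: "distinct q" using p(4) pq by simp
  have asne: "as \<noteq> []"
  proof
    assume "as = []"
    then have "{x, y'} \<in> Eext" using epq by (simp add: q_def)
    then show False using assms(1) r(2) by (simp add: Eext_def)
  qed
  have hq: "hd q = x" "last q = y'" by (simp_all add: q_def)
  have lq: "2 \<le> length q" by (simp add: q_def)
  have xy': "x \<noteq> y'" using dq by (simp add: q_def)
  define VB' where "VB' = VB \<union> set q"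
  define EB' where "EB' = EB \<union> set (path_links q)"
  have epqE: "epath E q" using epath_mono[OF epq Eext_E] .
  have hdas: "hd as \<in> VB'" "hd as \<notin> VB" using asne r(3) by (auto simp: VB'_def q_def)
  have VB'V: "VB' \<subseteq> V" using epath_V[OF epqE lq] VB_V by (auto simp: VB'_def)
  have finVB': "finite VB'" using finite_subset[OF VB'V finV] .
  have "biconn_sub V E VB' EB'"
    unfolding biconn_sub_def
  proof (intro conjI disjI2)
    show "VB' \<subseteq> V" by (rule VB'V)
    show "EB' \<subseteq> E" using EB_E epqE by (auto simp: EB'_def epath_def)
    show "\<forall>e\<in>EB'. e \<subseteq> VB'" using EB_VB pl_subset_edge by (fastforce simp: EB'_def VB'_def)
    have "card (insert (hd as) VB) \<le> card VB'"
      using hdas finVB' by (intro card_mono) (auto simp: VB'_def)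
    then show "3 \<le> card VB'" using cardVB hdas finVB by simp
    show "\<forall>v\<in>VB'. graph_conn (VB' - {v}) (del_vertex_edges EB' v)"
    proof
      fix v assume "v \<in> VB'"
      show "graph_conn (VB' - {v}) (del_vertex_edges EB' v)"
      proof (rule anchor_conn[where T = "VB - {v}"])
        have "card (VB' - {v}) \<ge> 2" using \<open>3 \<le> card VB'\<close> \<open>v \<in> VB'\<close> finVB' by simp
        then show "VB' - {v} \<noteq> {}" by (cases "VB' - {v} = {}") simp_all
        show "\<forall>t1\<in>VB - {v}. \<forall>t2\<in>VB - {v}. (adj (del_vertex_edges EB' v))\<^sup>*\<^sup>* t1 t2"
        proof (intro ballI)
          fix t1 t2 assume t: "t1 \<in> VB - {v}" "t2 \<in> VB - {v}"
          show "(adj (del_vertex_edges EB' v))\<^sup>*\<^sup>* t1 t2"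
          proof (cases "v \<in> VB")
            case True
            have "del_vertex_edges EB v \<subseteq> del_vertex_edges EB' v" by (auto simp: del_vertex_edges_def EB'_def)
            then show ?thesis using reach_mono[OF del_reach[OF True t]] by metis
          next
            case False
            have "EB \<subseteq> del_vertex_edges EB' v" using False EB_VB
              by (auto simp: del_vertex_edges_def EB'_def)
            moreover have "(adj EB)\<^sup>*\<^sup>* t1 t2" using Bconn t by blast
            ultimately show ?thesis using reach_mono by metis
          qed
        qed
        show "\<forall>u\<in>VB' - {v}. \<exists>t\<in>VB - {v}. (adj (del_vertex_edges EB' v))\<^sup>*\<^sup>* u t"
        proof
          fix u assume u: "u \<in> VB' - {v}"
          show "\<exists>t\<in>VB - {v}. (adj (del_vertex_edges EB' v))\<^sup>*\<^sup>* u t"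
          proof (cases "u \<in> VB")
            case True then show ?thesis using u by auto
          next
            case False
            then have "u \<in> set q" using u by (auto simp: VB'_def)
            have sub: "del_vertex_edges (set (path_links q)) v \<subseteq> del_vertex_edges EB' v"
              by (auto simp: del_vertex_edges_def EB'_def)
            have "u \<noteq> v" using u by blast
            from QR[OF dq \<open>u \<in> set q\<close> this] show ?thesis
            proof
              assume h: "(adj (del_vertex_edges (set (path_links q)) v))\<^sup>*\<^sup>* u (hd q) \<and> hd q \<noteq> v"
              then have "(adj (del_vertex_edges EB' v))\<^sup>*\<^sup>* u (hd q)" using reach_mono[OF _ sub] by blast
              moreover have "hd q \<in> VB - {v}" using h hq assms(1) by blast
              ultimately show ?thesis by blast
            next
              assume h: "(adj (del_vertex_edges (set (path_links q)) v))\<^sup>*\<^sup>* u (last q) \<and> last q \<noteq> v"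
              then have "(adj (del_vertex_edges EB' v))\<^sup>*\<^sup>* u (last q)" using reach_mono[OF _ sub] by blast
              moreover have "last q \<in> VB - {v}" using h hq r(2) by blast
              ultimately show ?thesis by blast
            qed
          qed
        qed
      qed
    qed
  qed
  moreover have "VB \<subseteq> VB'" "EB \<subseteq> EB'" by (auto simp: VB'_def EB'_def)
  ultimately have "VB' = VB" using maximal by blast
  then show False using hdas by blast
qed

lemma LV:
  assumes "(adj F)\<^sup>*\<^sup>* w z" "F \<subseteq> E" "w \<in> VB"
  shows "\<exists>x\<in>VB. (adj F)\<^sup>*\<^sup>* w x \<and> (adj Eext)\<^sup>*\<^sup>* x z"
  using assms(1)
proof (induction rule: rtranclp_induct)
  case base then show ?case using assms(3) by blast
next
  case (step y z)
  then obtain x where x: "x \<in> VB" "(adj F)\<^sup>*\<^sup>* w x" "(adj Eext)\<^sup>*\<^sup>* x y" by blast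
  show ?case
  proof (cases "z \<in> VB")
    case True
    then show ?thesis using step by (meson rtranclp.rtrancl_into_rtrancl rtranclp.rtrancl_refl)
  next
    case False
    then have "{y, z} \<in> Eext" using step(2) assms(2) by (auto simp: adj_def Eext_def)
    then have "(adj Eext)\<^sup>*\<^sup>* x z" using x(3) by (simp add: adj_def rtranclp.rtrancl_into_rtrancl)
    then show ?thesis using x by blast
  qed
qed

end


lemma first_edge:
  "\<exists>e\<in>set (path_links p). Q e \<Longrightarrow>
   \<exists>xs u v ys. p = xs @ u # v # ys \<and> Q {u, v} \<and> (\<forall>e\<in>set (path_links (xs @ [u])). \<not> Q e)"
proof (induction p)
  case Nil then show ?case by simp
next
  case (Cons x p')
  show ?case
  proof (cases p')
    case Nil then show ?thesis using Cons.prems by simp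
  next
    case (Cons y p'')
    show ?thesis
    proof (cases "Q {x, y}")
      case True
      then show ?thesis using \<open>p' = y # p''\<close> by (intro exI[of _ "[]"]) auto
    next
      case False
      then have "\<exists>e\<in>set (path_links p'). Q e" using Cons.prems \<open>p' = y # p''\<close> by auto
      then obtain xs u v ys where h: "p' = xs @ u # v # ys" "Q {u, v}"
        "\<forall>e\<in>set (path_links (xs @ [u])). \<not> Q e" using Cons.IH by blast
      have "hd (xs @ [u]) = y" using h(1) \<open>p' = y # p''\<close> by (cases xs) auto
      then have "path_links (x # xs @ [u]) = {x, y} # path_links (xs @ [u])"
        by (simp add: pl_Cons)
      then have "\<forall>e\<in>set (path_links ((x # xs) @ [u])). \<not> Q e" using h(3) False by simp
      then show ?thesis using h(1,2) by (intro exI[of _ "x # xs"]) auto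
    qed
  qed
qed

context setting
begin

definition bpA :: "'a list \<Rightarrow> bool" where
  "bpA s \<longleftrightarrow> 2 \<le> length s \<and> distinct s \<and> epath EB s \<and> hd s \<in> A \<and> last s \<in> A"

lemma meas_path_rev: "meas_path V E N p \<Longrightarrow> meas_path V E N (rev p)"
  unfolding meas_path_def simple_path_iff
  by (auto simp: hd_rev last_rev)

lemma EB_vertex: assumes "epath EB s" "2 \<le> length s" "x \<in> set s" shows "x \<in> VB"
proof -
  obtain e where "e \<in> set (path_links s)" "x \<in> e" using pl_cover assms(2,3) by metis
  then show ?thesis using assms(1) EB_VB by (auto simp: epath_def)
qed

lemma ENT:
  assumes mp: "meas_path V E (M \<union> A) p" and pe: "p = xs @ u # ys" and uVB: "u \<in> VB"
    and ne: "\<forall>e\<in>set (path_links (xs @ [u])). e \<notin> EB"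
  shows "u \<in> A"
proof (cases "xs = []")
  case True
  then have "u \<in> M \<union> A" using mp pe by (simp add: meas_path_def)
  then show ?thesis using MVB_A uVB by blast
next
  case False
  have sp: "distinct p" "epath E p" using mp by (auto simp: meas_path_def simple_path_iff)
  have epx: "epath E (xs @ [u])" using sp(2) pe epath_prefix[of E "xs @ [u]" ys] by simp
  have epxe: "epath Eext (xs @ [u])"
    using epx ne nonEB_ext by (auto simp: epath_def)
  have xsout: "\<forall>z\<in>set xs. z \<notin> VB"
  proof (intro ballI notI)
    fix z assume z: "z \<in> set xs" "z \<in> VB"
    then obtain as bs where xs: "xs = as @ z # bs" by (meson split_list)
    have "epath Eext (z # bs @ [u])" using epxe xs epath_suffix[of Eext as "z # bs @ [u]"] by simp
    then have "(adj Eext)\<^sup>*\<^sup>* z u" using epath_reach[of Eext "z # bs @ [u]"] by simp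
    moreover have "z \<noteq> u" using sp(1) pe xs by auto
    ultimately show False using no_ext_reach z(2) uVB by blast
  qed
  define m where "m = hd xs"
  have mxs: "m \<in> set xs" using False by (simp add: m_def)
  then have mVB: "m \<notin> VB" using xsout by blast
  have "hd p = m" using pe False by (simp add: m_def)
  then have "m \<in> M \<union> A" using mp by (simp add: meas_path_def)
  then have mM: "m \<in> M" using mVB A_VB by blast
  have rmu: "(adj Eext)\<^sup>*\<^sup>* m u"
    using epath_reach[OF epxe] False by (simp add: m_def)
  have "\<forall>w\<in>VB - {u}. \<not> (adj (del_vertex_edges E u))\<^sup>*\<^sup>* w m"
  proof (intro ballI notI)
    fix w assume w: "w \<in> VB - {u}" and r: "(adj (del_vertex_edges E u))\<^sup>*\<^sup>* w m"
    have FE: "del_vertex_edges E u \<subseteq> E" by (auto simp: del_vertex_edges_def)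
    obtain x where x: "x \<in> VB" "(adj (del_vertex_edges E u))\<^sup>*\<^sup>* w x" "(adj Eext)\<^sup>*\<^sup>* x m"
      using LV[OF r FE] w by blast
    have "x \<noteq> u"
    proof
      assume "x = u"
      then have "w = u" using x(2) reach_del_self by metis
      then show False using w by blast
    qed
    moreover have "(adj Eext)\<^sup>*\<^sup>* x u" using x(3) rmu by (rule rtranclp_trans)
    ultimately show False using no_ext_reach x(1) uVB by blast
  qed
  then show ?thesis using uVB mM mVB unfolding agents_def by blast
qed

lemma SEG:
  assumes mp: "meas_path V E (M \<union> A) p" and ex: "\<exists>e\<in>set (path_links p). e \<in> EB"
  shows "\<exists>xs s zs. p = xs @ s @ zs \<and> bpA s \<and>
     (\<forall>e\<in>set (path_links (xs @ [hd s])). e \<notin> EB) \<and> (\<forall>e\<in>set (path_links (last s # zs)). e \<notin> EB)"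
proof -
  have sp: "distinct p" "epath E p" using mp by (auto simp: meas_path_def simple_path_iff)
  obtain xs u v ys where h: "p = xs @ u # v # ys" "{u, v} \<in> EB"
    "\<forall>e\<in>set (path_links (xs @ [u])). e \<notin> EB"
    using first_edge[OF ex] by blast
  define rest where "rest = u # v # ys"
  have uVB: "u \<in> VB" using h(2) EB_VB by blast
  have uA: "u \<in> A" using ENT[OF mp h(1) uVB h(3)] .
  have dr: "distinct rest" using sp(1) h(1) by (simp add: rest_def)
  have pr: "p = xs @ rest" using h(1) by (simp add: rest_def)
  have epr: "epath E rest" using sp(2) pr epath_suffix by metis
  have mpr: "meas_path V E (M \<union> A) (rev p)" using meas_path_rev[OF mp] .
  show ?thesis
  proof (cases "\<forall>e\<in>set (path_links rest). e \<in> EB")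
    case True
    have er: "epath EB rest" using True by (auto simp: epath_def)
    have lr: "2 \<le> length rest" by (simp add: rest_def)
    have lVB: "last rest \<in> VB" using EB_vertex[OF er lr] by (simp add: rest_def)
    obtain p' x where px: "p = p' @ [x]" by (metis pr rest_def rev_exhaust append_is_Nil_conv list.distinct(1))
    have "last rest = x" using px pr by (metis last_appendR last_snoc list.distinct(1) rest_def)
    moreover have "rev p = [] @ x # rev p'" using px by simp
    ultimately have "last rest \<in> A" using ENT[OF mpr, of "[]" x "rev p'"] lVB by simp
    moreover have "bpA rest" using er lr dr uA calculation by (simp add: bpA_def rest_def)
    ultimately show ?thesis using pr h(3)
      by (intro exI[of _ xs] exI[of _ rest] exI[of _ "[]"]) (simp add: rest_def)
  next
    case False
    then have "\<exists>e\<in>set (path_links rest). e \<notin> EB" by blast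
    then obtain cs a b ds where g: "rest = cs @ a # b # ds" "{a, b} \<notin> EB"
      "\<forall>e\<in>set (path_links (cs @ [a])). \<not> e \<notin> EB"
      using first_edge[of rest "\<lambda>e. e \<notin> EB"] by blast
    have csne: "cs \<noteq> []"
    proof
      assume "cs = []"
      then show False using g(1,2) h(2) by (simp add: rest_def)
    qed
    define s where "s = cs @ [a]"
    have es: "epath EB s" using g(3) by (auto simp: epath_def s_def)
    have ls: "2 \<le> length s" using csne by (cases cs) (auto simp: s_def)
    have ds: "distinct s" using dr g(1) by (simp add: s_def)
    have hs: "hd s = u" using g(1) csne by (cases cs) (auto simp: s_def rest_def)
    have aVB: "a \<in> VB" using EB_vertex[OF es ls] by (simp add: s_def)
    have p3: "p = xs @ s @ (b # ds)" using pr g(1) by (simp add: s_def)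
    have noEB: "\<forall>e\<in>set (path_links (a # b # ds)). e \<notin> EB"
    proof (rule ccontr)
      assume "\<not> (\<forall>e\<in>set (path_links (a # b # ds)). e \<notin> EB)"
      then have "\<exists>e\<in>set (path_links (a # b # ds)). e \<in> EB" by blast
      then obtain gs c c' hs where k: "a # b # ds = gs @ c # c' # hs" "{c, c'} \<in> EB"
        "\<forall>e\<in>set (path_links (gs @ [c])). e \<notin> EB"
        using first_edge[of "a # b # ds" "\<lambda>e. e \<in> EB"] by blast
      have gsne: "gs \<noteq> []"
      proof
        assume "gs = []"
        then show False using k(1,2) g(2) by simp
      qed
      have hgs: "hd gs = a" using k(1) gsne by (cases gs) auto
      have cVB: "c \<in> VB" using k(2) EB_VB by blast
      have "p = (xs @ cs) @ (gs @ [c]) @ (c' # hs)" using pr g(1) k(1) by simp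
      then have "epath E (gs @ [c])" using sp(2) epath_prefix epath_suffix by metis
      then have "epath Eext (gs @ [c])" using k(3) nonEB_ext by (auto simp: epath_def)
      then have "(adj Eext)\<^sup>*\<^sup>* a c" using epath_reach[of Eext "gs @ [c]"] hgs gsne by simp
      moreover have "a \<noteq> c"
      proof -
        have "distinct (a # b # ds)" using dr g(1) by simp
        then have "distinct (gs @ c # c' # hs)" using k(1) by simp
        then have "c \<notin> set gs" by simp
        moreover have "a \<in> set gs" using hgs gsne by (cases gs) auto
        ultimately show ?thesis by blast
      qed
      ultimately show False using no_ext_reach aVB cVB by blast
    qed
    have "rev p = rev (b # ds) @ a # rev (xs @ cs)" using p3 by (simp add: s_def)
    moreover have "\<forall>e\<in>set (path_links (rev (b # ds) @ [a])). e \<notin> EB"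
    proof -
      have "rev (b # ds) @ [a] = rev (a # b # ds)" by simp
      then show ?thesis using noEB by (simp only: pl_rev set_rev)
    qed
    ultimately have aA: "a \<in> A" using ENT[OF mpr _ aVB] by blast
    have "bpA s" using es ls ds hs uA aA by (simp add: bpA_def s_def)
    moreover have "last s = a" by (simp add: s_def)
    moreover have "\<forall>e\<in>set (path_links (xs @ [hd s])). e \<notin> EB" using h(3) hs by simp
    ultimately show ?thesis using p3 noEB by blast
  qed
qed

lemma seg_meas:
  assumes "p = xs @ s @ zs" "s \<noteq> []" "\<forall>e. e \<notin> EB \<longrightarrow> f e = 0"
    "\<forall>e\<in>set (path_links (xs @ [hd s])). e \<notin> EB" "\<forall>e\<in>set (path_links (last s # zs)). e \<notin> EB"
  shows "measurement f p = measurement f s"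
proof -
  have z1: "measurement f (xs @ [hd s]) = 0" using assms(3,4) by (intro measurement_zero) blast
  have z2: "measurement f (last s # zs) = 0" using assms(3,5) by (intro measurement_zero) blast
  have "xs @ s = butlast (xs @ [hd s]) @ s" by simp
  then have m1: "measurement f (xs @ s) = measurement f s"
    using measurement_append[of "xs @ [hd s]" s f] assms(2) z1 by simp
  have "xs @ s = butlast (xs @ s) @ [last (xs @ s)]"
    by (rule append_butlast_last_id[symmetric]) (simp add: assms(2))
  then have "xs @ s = butlast (xs @ s) @ [last s]" using assms(2) by simp
  then have "p = butlast (xs @ s) @ (last s # zs)" using assms(1)
    by (metis append.assoc append_Cons append_Nil)
  then have "measurement f p = measurement f (xs @ s) + measurement f (last s # zs)"
    using measurement_append[of "xs @ s" "last s # zs" f] assms(2) by simp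
  then show ?thesis using m1 z2 by simp
qed

lemma TEST:
  assumes idf: "identifiable V E (M \<union> A) l" and f0: "\<forall>e. e \<notin> EB \<longrightarrow> f e = 0"
    and fs: "\<forall>s. bpA s \<longrightarrow> measurement f s = 0"
  shows "f l = 0"
proof -
  have "\<forall>p. meas_path V E (M \<union> A) p \<longrightarrow> measurement f p = measurement (\<lambda>_. 0) p"
  proof (intro allI impI)
    fix p assume mp: "meas_path V E (M \<union> A) p"
    have z: "measurement (\<lambda>_. 0) p = 0" by (rule measurement_zero) simp
    show "measurement f p = measurement (\<lambda>_. 0) p"
    proof (cases "\<exists>e\<in>set (path_links p). e \<in> EB")
      case True
      then obtain xs s zs where k: "p = xs @ s @ zs" "bpA s"
        "\<forall>e\<in>set (path_links (xs @ [hd s])). e \<notin> EB" "\<forall>e\<in>set (path_links (last s # zs)). e \<notin> EB"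
        using SEG[OF mp] by blast
      have "s \<noteq> []" using k(2) by (auto simp: bpA_def)
      then have "measurement f p = measurement f s" using seg_meas[OF k(1) _ f0 k(3,4)] by blast
      then show ?thesis using fs k(2) z by simp
    next
      case False
      then have "measurement f p = 0" using f0 by (intro measurement_zero) blast
      then show ?thesis using z by simp
    qed
  qed
  moreover have "(\<forall>p. meas_path V E (M \<union> A) p \<longrightarrow> measurement f p = measurement (\<lambda>_. 0) p) \<longrightarrow> f l = (\<lambda>_. (0::real)) l"
    using idf unfolding identifiable_def by blast
  ultimately show ?thesis by simp
qed

end


lemma hd_butlast_app:
  "P \<noteq> [] \<Longrightarrow> Q \<noteq> [] \<Longrightarrow> last P = hd Q \<Longrightarrow> hd (butlast P @ Q) = hd P"
proof (cases "butlast P = []")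
  case True
  assume "P \<noteq> []" "last P = hd Q"
  then have "P = [last P]" using True append_butlast_last_id[of P] by simp
  then show ?thesis using True \<open>last P = hd Q\<close> by (metis append_Nil list.sel(1))
next
  case False
  assume "P \<noteq> []"
  then have "hd (butlast P) = hd P" using False
    by (metis append_butlast_last_id hd_append2)
  then show ?thesis using False by simp
qed

lemma hd_last_distinct: "distinct p \<Longrightarrow> 2 \<le> length p \<Longrightarrow> hd p \<noteq> last p"
  by (cases p) (auto simp: last_in_set)

lemma epath_glue:
  "epath F P \<Longrightarrow> epath F Q \<Longrightarrow> P \<noteq> [] \<Longrightarrow> Q \<noteq> [] \<Longrightarrow> last P = hd Q \<Longrightarrow> epath F (butlast P @ Q)"
  by (simp add: epath_def pl_join)

context setting
begin

definition agent_path :: "'a \<Rightarrow> 'a list \<Rightarrow> bool" where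
  "agent_path a P \<longleftrightarrow> P \<noteq> [] \<and> last P = a \<and> hd P \<in> M \<and> distinct P \<and> epath E P \<and>
     (\<forall>x\<in>set (butlast P). \<forall>u\<in>VB - {a}. \<not> (adj (del_vertex_edges E a))\<^sup>*\<^sup>* u x)"

lemma agent_path_ex: assumes "a \<in> A" shows "\<exists>P. agent_path a P"
proof (cases "a \<in> M")
  case True
  then show ?thesis by (intro exI[of _ "[a]"]) (simp add: agent_path_def)
next
  case False
  then obtain m where m: "m \<in> M" "m \<notin> VB" "\<forall>u\<in>VB - {a}. \<not> (adj (del_vertex_edges E a))\<^sup>*\<^sup>* u m"
    and aVB: "a \<in> VB"
    using assms unfolding agents_def by blast
  have "m \<in> V" "a \<in> V" using m(1) MV aVB VB_V by auto
  then have "(adj E)\<^sup>*\<^sup>* m a" using conn by (simp add: graph_conn_def)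
  then obtain P where P: "P \<noteq> []" "hd P = m" "last P = a" "distinct P" "epath E P"
    using walk2path[OF \<open>(adj E)\<^sup>*\<^sup>* m a\<close>] by blast
  have "\<forall>x\<in>set (butlast P). \<forall>u\<in>VB - {a}. \<not> (adj (del_vertex_edges E a))\<^sup>*\<^sup>* u x"
  proof (intro ballI notI)
    fix x u assume x: "x \<in> set (butlast P)" and u: "u \<in> VB - {a}"
      and r: "(adj (del_vertex_edges E a))\<^sup>*\<^sup>* u x"
    obtain as bs where ab: "butlast P = as @ x # bs" using x by (meson split_list)
    have "P = butlast P @ [last P]" using P(1) by (rule append_butlast_last_id[symmetric])
    also have "\<dots> = as @ x # bs @ [a]" using ab P(3) by simp
    finally have Peq: "P = as @ x # bs @ [a]" .
    have "epath E (as @ [x])" using P(5) Peq epath_prefix[of E "as @ [x]" "bs @ [a]"] by simp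
    moreover have "a \<notin> set (as @ [x])" using P(4) Peq by auto
    ultimately have "epath (del_vertex_edges E a) (as @ [x])" by (rule epath_avoid)
    then have "(adj (del_vertex_edges E a))\<^sup>*\<^sup>* (hd (as @ [x])) x"
      using epath_reach by fastforce
    moreover have "hd (as @ [x]) = m" using P(2) Peq by (cases as) auto
    ultimately have "(adj (del_vertex_edges E a))\<^sup>*\<^sup>* x m" using reach_sym by metis
    then have "(adj (del_vertex_edges E a))\<^sup>*\<^sup>* u m" using r by (rule rtranclp_trans[rotated])
    then show False using m(3) u by blast
  qed
  then show ?thesis using P m(1) by (intro exI[of _ P]) (simp add: agent_path_def)
qed

lemma agent_path_out:
  assumes "agent_path a P" "x \<in> set (butlast P)" shows "x \<notin> VB"
proof
  assume "x \<in> VB"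
  have "distinct P" "P \<noteq> []" "last P = a" using assms(1) by (auto simp: agent_path_def)
  then have "x \<noteq> a" using assms(2) append_butlast_last_id[of P]
    by (metis distinct_append disjoint_iff list.set_intros(1))
  then have "x \<in> VB - {a}" using \<open>x \<in> VB\<close> by blast
  then show False using assms unfolding agent_path_def by blast
qed

lemma agent_path_disj:
  assumes "a \<noteq> b" "a \<in> VB" "agent_path a Pa" "agent_path b Pb" "b \<in> VB"
    "x \<in> set (butlast Pa)" "x \<in> set (butlast Pb)"
  shows False
proof -
  have Pb: "Pb \<noteq> []" "last Pb = b" "epath E Pb" using assms(4) by (auto simp: agent_path_def)
  obtain as bs where ab: "butlast Pb = as @ x # bs" using assms(7) by (meson split_list)
  have "Pb = butlast Pb @ [last Pb]" using Pb(1) by (rule append_butlast_last_id[symmetric])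
  also have "\<dots> = as @ x # bs @ [b]" using ab Pb(2) by simp
  finally have Peq: "Pb = as @ x # bs @ [b]" .
  have "epath E (x # bs @ [b])" using Pb(3) Peq epath_suffix[of E as "x # bs @ [b]"] by simp
  moreover have "a \<notin> set (x # bs @ [b])"
  proof
    assume "a \<in> set (x # bs @ [b])"
    then have "a \<in> set (butlast Pb)" using ab assms(1) by auto
    then show False using agent_path_out[OF assms(4)] assms(2) by blast
  qed
  ultimately have "epath (del_vertex_edges E a) (x # bs @ [b])" by (rule epath_avoid)
  then have "(adj (del_vertex_edges E a))\<^sup>*\<^sup>* x b" using epath_reach by fastforce
  then have r: "(adj (del_vertex_edges E a))\<^sup>*\<^sup>* b x" using reach_sym by metis
  have "b \<in> VB - {a}" using assms(1,5) by blast
  then show False using r assms(3,6) unfolding agent_path_def by blast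
qed

lemma C1:
  assumes dM: "\<forall>p. meas_path V E M p \<longrightarrow> measurement d p = 0"
    and bs: "bpA s" and P1: "agent_path (hd s) P1" and P2: "agent_path (last s) P2"
  shows "measurement d s = - measurement d P1 - measurement d P2"
proof -
  have s: "2 \<le> length s" "distinct s" "epath EB s" "hd s \<in> A" "last s \<in> A"
    using bs by (auto simp: bpA_def)
  have sne: "s \<noteq> []" using s(1) by auto
  have ab: "hd s \<noteq> last s" using hd_last_distinct s(1,2) by blast
  have aVB: "hd s \<in> VB" "last s \<in> VB" using s(4,5) A_VB by auto
  have p1: "P1 \<noteq> []" "last P1 = hd s" "hd P1 \<in> M" "distinct P1" "epath E P1"
    using P1 by (auto simp: agent_path_def)
  have p2: "P2 \<noteq> []" "last P2 = last s" "hd P2 \<in> M" "distinct P2" "epath E P2"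
    using P2 by (auto simp: agent_path_def)
  define Q where "Q = s @ rev (butlast P2)"
  define p where "p = butlast P1 @ Q"
  have Qne: "Q \<noteq> []" using sne by (simp add: Q_def)
  have hQ: "hd Q = hd s" using sne by (simp add: Q_def)
  have rQ: "rev Q = butlast P2 @ rev s" by (simp add: Q_def)
  have mQ: "measurement d Q = measurement d P2 + measurement d s"
  proof -
    have "measurement d Q = measurement d (rev Q)" by simp
    also have "\<dots> = measurement d P2 + measurement d (rev s)"
      using rQ measurement_append[of P2 "rev s" d] p2(1,2) sne by (simp add: hd_rev)
    finally show ?thesis by simp
  qed
  have mp: "measurement d p = measurement d P1 + measurement d Q"
    using measurement_append[of P1 Q d] p1(1,2) Qne hQ by (simp add: p_def)
  have EBE: "epath E s" using s(3) EB_E epath_mono by blast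
  have epQ: "epath E Q"
  proof -
    have "epath E (butlast P2 @ rev s)"
      using epath_glue[of E P2 "rev s"] p2 EBE sne by (simp add: hd_rev)
    then show ?thesis using rQ by (metis epath_rev)
  qed
  have epp: "epath E p" using epath_glue[OF p1(5) epQ p1(1) Qne] p1(2) hQ by (simp add: p_def)
  have lp: "2 \<le> length p" using s(1) by (simp add: p_def Q_def)
  have sVB: "set s \<subseteq> VB" using EB_vertex[OF s(3) s(1)] by blast
  have o1: "set (butlast P1) \<inter> VB = {}" using agent_path_out[OF P1] by blast
  have o2: "set (butlast P2) \<inter> VB = {}" using agent_path_out[OF P2] by blast
  have o12: "set (butlast P1) \<inter> set (butlast P2) = {}"
    using agent_path_disj[OF ab aVB(1) P1 P2 aVB(2)] by blast
  have dp: "distinct p"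
    using distinct_butlast[OF p1(4)] distinct_butlast[OF p2(4)] s(2) sVB o1 o2 o12
    by (auto simp: p_def Q_def)
  have hp: "hd p = hd P1" using hd_butlast_app[OF p1(1) Qne] p1(2) hQ by (simp add: p_def)
  have "rev p = butlast P2 @ (rev s @ rev (butlast P1))" by (simp add: p_def Q_def)
  then have "hd (rev p) = hd P2"
    using hd_butlast_app[of P2 "rev s @ rev (butlast P1)"] p2(1,2) sne by (simp add: hd_rev)
  then have lpp: "last p = hd P2" using lp by (simp add: hd_rev)
  have "meas_path V E M p"
    unfolding meas_path_def simple_path_iff
    using lp dp epath_V[OF epp lp] epp hp lpp p1(3) p2(3) hd_last_distinct[OF dp lp] by simp
  then have "measurement d p = 0" using dM by blast
  then show ?thesis using mp mQ by simp
qed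

lemma C2:
  assumes C: "\<forall>s. bpA s \<longrightarrow> measurement d s = h (hd s) + h (last s)"
    and bs: "bpA s" and se: "s = xs @ k # ys" and ne: "xs \<noteq> []" "ys \<noteq> []" and kA: "k \<in> A"
  shows "h k = 0"
proof -
  have s: "2 \<le> length s" "distinct s" "epath EB s" "hd s \<in> A" "last s \<in> A"
    using bs by (auto simp: bpA_def)
  have b1: "bpA (xs @ [k])"
    unfolding bpA_def using s se ne kA epath_prefix[of EB "xs @ [k]" ys]
    by (cases xs) auto
  have b2: "bpA (k # ys)"
    unfolding bpA_def using s se ne kA epath_suffix[of EB xs "k # ys"]
    by (cases ys) auto
  have "measurement d s = measurement d (xs @ [k]) + measurement d (k # ys)"
    using measurement_append[of "xs @ [k]" "k # ys" d] se by simp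
  moreover have "hd (xs @ [k]) = hd s" "last (k # ys) = last s" using se ne by (cases xs; simp)+
  ultimately show ?thesis using C b1 b2 bs by simp
qed

end


context setting
begin

lemma del_path:
  assumes "(adj (del_vertex_edges EB v))\<^sup>*\<^sup>* u w" "u \<noteq> w"
  shows "\<exists>R. R \<noteq> [] \<and> hd R = u \<and> last R = w \<and> distinct R \<and> epath EB R \<and> v \<notin> set R"
proof -
  obtain R where R: "R \<noteq> []" "hd R = u" "last R = w" "distinct R" "epath (del_vertex_edges EB v) R"
    using walk2path[OF assms(1)] by blast
  have l2: "2 \<le> length R"
  proof (rule ccontr)
    assume "\<not> 2 \<le> length R"
    then obtain c where "R = [c]" using R(1) by (cases R rule: remdups_adj.cases) auto
    then show False using R(2,3) assms(2) by simp
  qed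
  have "v \<notin> set R"
  proof
    assume "v \<in> set R"
    then obtain e where "e \<in> set (path_links R)" "v \<in> e" using pl_cover l2 by metis
    then show False using R(5) by (auto simp: epath_def del_vertex_edges_def)
  qed
  moreover have "epath EB R" using R(5) by (rule epath_mono) (auto simp: del_vertex_edges_def)
  ultimately show ?thesis using R by blast
qed

lemma FL_n:
  assumes x: "x \<in> VB" and y: "y \<in> VB" and xy: "x \<noteq> y"
  shows "\<forall>z. z \<in> VB \<longrightarrow> z \<noteq> x \<longrightarrow> z \<noteq> y \<longrightarrow> (adj EB ^^ n) z x \<longrightarrow>
     (\<exists>s. s \<noteq> [] \<and> distinct s \<and> epath EB s \<and> hd s = x \<and> last s = y \<and> z \<in> set s)"
proof (induction n)
  case 0 then show ?case by simp
next
  case (Suc n)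
  show ?case
  proof (intro allI impI)
    fix z assume z: "z \<in> VB" "z \<noteq> x" "z \<noteq> y" and zn: "(adj EB ^^ Suc n) z x"
    obtain z' where zz: "adj EB z z'" "(adj EB ^^ n) z' x" using relpowp_Suc_D2[OF zn] by blast
    have ezz: "{z, z'} \<in> EB" using zz(1) by (simp add: adj_def)
    have z'VB: "z' \<in> VB" using ezz EB_VB by blast
    have zz': "z \<noteq> z'" using ezz EB_E edge_distinct by blast
    show "\<exists>s. s \<noteq> [] \<and> distinct s \<and> epath EB s \<and> hd s = x \<and> last s = y \<and> z \<in> set s"
    proof (cases "z' = x")
      case True
      have "(adj (del_vertex_edges EB x))\<^sup>*\<^sup>* z y" using del_reach x z y xy by blast
      then obtain R where R: "R \<noteq> []" "hd R = z" "last R = y" "distinct R" "epath EB R" "x \<notin> set R"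
        using del_path z(3) by blast
      obtain R' where R': "R = z # R'" using R(1,2) by (cases R) auto
      have "{x, z} \<in> EB" using ezz True by (simp add: insert_commute)
      then have "epath EB (x # R)" using R(5) R' by simp
      then show ?thesis using R R' by (intro exI[of _ "x # R"]) auto
    next
      case False
      show ?thesis
      proof (cases "z' = y")
        case True
        have "(adj (del_vertex_edges EB y))\<^sup>*\<^sup>* x z" using del_reach x z y xy by blast
        then obtain R where R: "R \<noteq> []" "hd R = x" "last R = z" "distinct R" "epath EB R" "y \<notin> set R"
          using del_path z(2) by metis
        have "epath EB (R @ [y])" using R(1,3,5) ezz True by (simp add: epath_append)
        then show ?thesis using R by (intro exI[of _ "R @ [y]"]) auto
      next
        case False
        obtain s where s: "s \<noteq> []" "distinct s" "epath EB s" "hd s = x" "last s = y" "z' \<in> set s"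
          using Suc.IH z'VB \<open>z' \<noteq> x\<close> False zz(2) by blast
        show ?thesis
        proof (cases "z \<in> set s")
          case True then show ?thesis using s by blast
        next
          case zs: False
          have "(adj (del_vertex_edges EB z'))\<^sup>*\<^sup>* z x" using del_reach z'VB z x zz' \<open>z' \<noteq> x\<close> by blast
          then obtain R where R: "R \<noteq> []" "hd R = z" "last R = x" "distinct R" "epath EB R" "z' \<notin> set R"
            using del_path z(2) by metis
          have "\<exists>r\<in>set R. r \<in> set s" using R(1,3) s(1,4) by (metis hd_in_set last_in_set)
          then obtain r1 t r2 where rt: "R = r1 @ t # r2" "t \<in> set s" "\<forall>r\<in>set r1. r \<notin> set s"
            by (rule split_list_first_propE)
          have r1ne: "r1 \<noteq> []"
          proof
            assume "r1 = []"
            then have "t = z" using rt(1) R(2) by simp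
            then show False using rt(2) zs by simp
          qed
          have hr1: "hd r1 = z" using rt(1) R(2) r1ne by (cases r1) auto
          define Rp where "Rp = r1 @ [t]"
          have eRp: "epath EB Rp" using R(5) rt(1) epath_prefix[of EB "r1 @ [t]" r2] by (simp add: Rp_def)
          have dR: "distinct r1" "t \<notin> set r1" "z' \<notin> set r1" "t \<noteq> z'"
            using R(4,6) rt(1) by auto
          obtain s1 s2 where ss: "s = s1 @ z' # s2" using s(6) by (meson split_list)
          have tin: "t \<in> set s1 \<or> t \<in> set s2" using rt(2) ss dR(4) by auto
          have ds: "distinct s1" "distinct s2" "z' \<notin> set s1" "z' \<notin> set s2" "set s1 \<inter> set s2 = {}"
            using s(2) ss by auto
          have ezz': "{z, z'} \<in> EB" by (rule ezz)
          have r1s: "set r1 \<inter> set s = {}" using rt(3) by blast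
          show ?thesis
          proof (cases "t \<in> set s1")
            case True
            then obtain a1 a2 where aa: "s1 = a1 @ t # a2" by (meson split_list)
            define new where "new = a1 @ t # rev r1 @ z' # s2"
            have e1: "epath EB (a1 @ [t])"
              using s(3) ss aa epath_prefix[of EB "a1 @ [t]" "a2 @ z' # s2"] by simp
            have e2: "epath EB (z' # s2)"
              using s(3) ss epath_suffix[of EB s1 "z' # s2"] by simp
            have "epath EB (rev Rp)" using eRp by simp
            then have eR: "epath EB (t # rev r1)" by (simp add: Rp_def)
            have eX: "epath EB (a1 @ rev Rp)"
              using epath_glue[OF e1 eR] by (simp add: Rp_def)
            have lX: "last (a1 @ rev Rp) = z" using hr1 r1ne by (simp add: Rp_def last_rev)
            have "epath EB ((a1 @ rev Rp) @ (z' # s2)) = (epath EB (a1 @ rev Rp) \<and>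
                 {last (a1 @ rev Rp), hd (z' # s2)} \<in> EB \<and> epath EB (z' # s2))"
              by (rule epath_append) (simp_all add: Rp_def)
            then have "epath EB ((a1 @ rev Rp) @ (z' # s2))"
              using eX e2 lX ezz' by simp
            then have enew: "epath EB new" by (simp add: new_def Rp_def)
            have dnew: "distinct new"
              using ds dR r1s aa ss by (auto simp: new_def)
            have hnew: "hd new = x" using s(4) ss aa by (cases a1) (auto simp: new_def)
            have lnew: "last new = y" using s(5) ss by (simp add: new_def)
            have znew: "z \<in> set new" using hr1 r1ne by (auto simp: new_def)
            show ?thesis using enew dnew hnew lnew znew by (intro exI[of _ new]) (auto simp: new_def)
          next
            case False
            then have "t \<in> set s2" using tin by blast
            then obtain b1 b2 where bb: "s2 = b1 @ t # b2" by (meson split_list)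
            define new where "new = s1 @ z' # r1 @ t # b2"
            have e1: "epath EB (s1 @ [z'])"
              using s(3) ss epath_prefix[of EB "s1 @ [z']" s2] by simp
            have e2: "epath EB (t # b2)"
              using s(3) ss bb epath_suffix[of EB "s1 @ z' # b1" "t # b2"] by simp
            have eY: "epath EB (butlast Rp @ (t # b2))"
              using epath_glue[OF eRp e2] by (simp add: Rp_def)
            have eY': "epath EB (r1 @ t # b2)" using eY by (simp add: Rp_def)
            have h1: "hd (r1 @ t # b2) = z" using hr1 r1ne by simp
            have "epath EB ((s1 @ [z']) @ (r1 @ t # b2)) = (epath EB (s1 @ [z']) \<and>
                 {last (s1 @ [z']), hd (r1 @ t # b2)} \<in> EB \<and> epath EB (r1 @ t # b2))"
              by (rule epath_append) simp_all
            then have "epath EB ((s1 @ [z']) @ (r1 @ t # b2))"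
              using e1 eY' h1 ezz' by (simp add: insert_commute)
            then have enew: "epath EB new" by (simp add: new_def)
            have dnew: "distinct new"
              using ds dR r1s bb ss by (auto simp: new_def)
            have hnew: "hd new = x" using s(4) ss by (cases s1) (auto simp: new_def)
            have lnew: "last new = y" using s(5) ss bb by (simp add: new_def)
            have znew: "z \<in> set new" using hr1 r1ne by (auto simp: new_def)
            show ?thesis using enew dnew hnew lnew znew by (intro exI[of _ new]) (auto simp: new_def)
          qed
        qed
      qed
    qed
  qed
qed

lemma FL:
  assumes "x \<in> VB" "y \<in> VB" "z \<in> VB" "x \<noteq> y" "z \<noteq> x" "z \<noteq> y"
  shows "\<exists>s. s \<noteq> [] \<and> distinct s \<and> epath EB s \<and> hd s = x \<and> last s = y \<and> z \<in> set s"
proof -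
  have "(adj EB)\<^sup>*\<^sup>* z x" using Bconn assms(1,3) by blast
  then obtain n where "(adj EB ^^ n) z x" using rtranclp_power by metis
  then show ?thesis using FL_n[OF assms(1,2,4)] assms(3,5,6) by blast
qed

end


context setting
begin

lemma hard_dir:
  assumes idf: "identifiable V E (M \<union> A) l" and lEB: "l \<in> EB"
    and exc: "\<not> (card A = 2 \<and> l = A)"
    and dM: "\<forall>p. meas_path V E M p \<longrightarrow> measurement d p = 0"
  shows "d l = 0"
proof -
  define P where "P a = (SOME P. agent_path a P)" for a
  have Pa: "agent_path a (P a)" if "a \<in> A" for a
    using agent_path_ex[OF that] unfolding P_def by (rule someI_ex)
  define h where "h a = - measurement d (P a)" for a
  have C: "\<forall>s. bpA s \<longrightarrow> measurement d s = h (hd s) + h (last s)"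
  proof (intro allI impI)
    fix s assume bs: "bpA s"
    then have "hd s \<in> A" "last s \<in> A" by (auto simp: bpA_def)
    then show "measurement d s = h (hd s) + h (last s)"
      using C1[OF dM bs Pa Pa] by (simp add: h_def)
  qed
  have Cz: "h k = 0" if "bpA s" "s = xs @ k # ys" "xs \<noteq> []" "ys \<noteq> []" "k \<in> A" for s xs k ys
    using C2[OF C that] .
  define g where "g a e = (if a \<in> e then h a else 0)" for a e
  have g_eq: "g a = (\<lambda>e. if a \<in> e then h a else 0)" for a by (rule ext) (simp add: g_def)
  define f where "f e = (if e \<in> EB then d e - (\<Sum>a\<in>A. g a e) else 0)" for e
  have f0: "\<forall>e. e \<notin> EB \<longrightarrow> f e = 0" by (simp add: f_def)
  have fs: "\<forall>s. bpA s \<longrightarrow> measurement f s = 0"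
  proof (intro allI impI)
    fix s assume bs: "bpA s"
    have s: "2 \<le> length s" "distinct s" "epath EB s" "hd s \<in> A" "last s \<in> A"
      using bs by (auto simp: bpA_def)
    have hl: "hd s \<noteq> last s" using hd_last_distinct s(1,2) by blast
    have "measurement f s = measurement (\<lambda>e. d e - (\<Sum>a\<in>A. g a e)) s"
      using s(3) by (intro measurement_cong) (auto simp: f_def epath_def)
    also have "\<dots> = measurement d s - (\<Sum>a\<in>A. measurement (g a) s)"
      by (simp add: measurement_diff measurement_sum)
    also have "(\<Sum>a\<in>A. measurement (g a) s) =
        (\<Sum>a\<in>A. (if a = hd s then h (hd s) else 0) + (if a = last s then h (last s) else 0))"
    proof (rule sum.cong)
      fix a assume aA: "a \<in> A"
      show "measurement (g a) s = (if a = hd s then h (hd s) else 0) + (if a = last s then h (last s) else 0)"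
      proof (cases "a = hd s")
        case True
        then show ?thesis using measurement_hd[OF s(2,1), of "h (hd s)"] hl by (simp add: g_eq)
      next
        case False
        show ?thesis
        proof (cases "a = last s")
          case True
          then show ?thesis using measurement_last[OF s(2,1), of "h (last s)"] hl False by (simp add: g_eq)
        next
          case nl: False
          show ?thesis
          proof (cases "a \<in> set s")
            case True
            then obtain xs ys where sp: "s = xs @ a # ys" by (meson split_list)
            have "xs \<noteq> []" using sp False by auto
            moreover have "ys \<noteq> []" using sp nl by auto
            ultimately have "h a = 0" using Cz[OF bs sp _ _ aA] by blast
            then have "measurement (g a) s = 0" by (intro measurement_zero) (simp add: g_def)
            then show ?thesis using False nl by simp
          next
            case nin: False
            then show ?thesis using measurement_notin[OF nin] False nl by (simp add: g_eq)
          qed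
        qed
      qed
    qed simp
    also have "\<dots> = h (hd s) + h (last s)"
      using s(4,5) finA by (simp add: sum.distrib)
    finally show "measurement f s = 0" using C bs by simp
  qed
  have "f l = 0" using TEST[OF idf f0 fs] .
  then have dl: "d l = (\<Sum>a\<in>A. g a l)" using lEB by (simp add: f_def)
  obtain u v where uv: "u \<noteq> v" "l = {u, v}" using edge_form lEB EB_E by blast
  consider (le1) "card A \<le> 1" | (two) "card A = 2" | (ge3) "card A \<ge> 3" by linarith
  then show ?thesis
  proof cases
    case le1
    define t where "t e = (if e = l then 1 else (0::real))" for e
    have t0: "\<forall>e. e \<notin> EB \<longrightarrow> t e = 0" using lEB by (auto simp: t_def)
    have ts: "\<forall>s. bpA s \<longrightarrow> measurement t s = 0"
    proof (intro allI impI)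
      fix s assume bs: "bpA s"
      have s: "2 \<le> length s" "distinct s" "hd s \<in> A" "last s \<in> A"
        using bs by (auto simp: bpA_def)
      have "hd s \<noteq> last s" using hd_last_distinct s(1,2) by blast
      then have "card {hd s, last s} = 2" by simp
      moreover have "card {hd s, last s} \<le> card A" using s(3,4) finA by (intro card_mono) auto
      ultimately show "measurement t s = 0" using le1 by simp
    qed
    have "t l = 0" using TEST[OF idf t0 ts] .
    then show ?thesis by (simp add: t_def)
  next
    case two
    then obtain a1 a2 where A2: "A = {a1, a2}" "a1 \<noteq> a2" by (meson card_2_iff)
    define t where "t e = (if e \<in> EB then (if a1 \<in> e then 1 else 0) - (if a2 \<in> e then 1 else (0::real)) else 0)" for e
    have t0: "\<forall>e. e \<notin> EB \<longrightarrow> t e = 0" by (auto simp: t_def)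
    have ts: "\<forall>s. bpA s \<longrightarrow> measurement t s = 0"
    proof (intro allI impI)
      fix s assume bs: "bpA s"
      have s: "2 \<le> length s" "distinct s" "epath EB s" "hd s \<in> A" "last s \<in> A"
        using bs by (auto simp: bpA_def)
      have hl: "hd s \<noteq> last s" using hd_last_distinct s(1,2) by blast
      have "measurement t s = measurement (\<lambda>e. (if a1 \<in> e then 1 else 0) - (if a2 \<in> e then 1 else (0::real))) s"
        using s(3) by (intro measurement_cong) (auto simp: t_def epath_def)
      also have "\<dots> = measurement (\<lambda>e. if a1 \<in> e then 1 else 0) s - measurement (\<lambda>e. if a2 \<in> e then 1 else 0) s"
        by (rule measurement_diff)
      also have "\<dots> = 0"
      proof -
        have "(hd s = a1 \<and> last s = a2) \<or> (hd s = a2 \<and> last s = a1)" using s(4,5) hl A2 by auto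
        then show ?thesis
          using measurement_hd[OF s(2,1), of 1] measurement_last[OF s(2,1), of 1] by auto
      qed
      finally show "measurement t s = 0" .
    qed
    have "t l = 0" using TEST[OF idf t0 ts] .
    then have "(a1 \<in> l) = (a2 \<in> l)" using lEB by (auto simp: t_def split: if_splits)
    moreover have "\<not> (a1 \<in> l \<and> a2 \<in> l)"
    proof
      assume "a1 \<in> l \<and> a2 \<in> l"
      then have "l = A" using uv A2 by auto
      then show False using exc two by simp
    qed
    ultimately have "a1 \<notin> l" "a2 \<notin> l" by auto
    then show ?thesis using dl A2 by (simp add: g_def)
  next
    case ge3
    have "\<forall>k\<in>A. h k = 0"
    proof
      fix k assume kA: "k \<in> A"
      have "card (A - {k}) \<ge> 2" using ge3 kA finA by simp
      then have "A - {k} \<noteq> {}" by (cases "A - {k} = {}") simp_all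
      then obtain i where i: "i \<in> A - {k}" by blast
      have "card (A - {k} - {i}) \<ge> 1" using \<open>card (A - {k}) \<ge> 2\<close> i finA by simp
      then have "A - {k} - {i} \<noteq> {}" by (cases "A - {k} - {i} = {}") simp_all
      then obtain j where j: "j \<in> A - {k} - {i}" by blast
      have ij: "i \<in> A - {k}" "j \<in> A - {k}" "i \<noteq> j" using i j by auto
      have ijk: "i \<in> VB" "j \<in> VB" "k \<in> VB" using ij kA A_VB by auto
      obtain s where s: "s \<noteq> []" "distinct s" "epath EB s" "hd s = i" "last s = j" "k \<in> set s"
        using FL[OF ijk _ _ _] ij by blast
      have ls: "2 \<le> length s"
      proof (rule ccontr)
        assume "\<not> 2 \<le> length s"
        then obtain c where "s = [c]" using s(1) by (cases s rule: remdups_adj.cases) auto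
        then show False using s(4,5) ij by simp
      qed
      have bs: "bpA s" using ls s ij by (simp add: bpA_def)
      obtain xs ys where sp: "s = xs @ k # ys" using s(6) by (meson split_list)
      have "xs \<noteq> []" using sp s(4) ij by auto
      moreover have "ys \<noteq> []" using sp s(5) ij by auto
      ultimately show "h k = 0" using Cz[OF bs sp _ _ kA] by blast
    qed
    then have "(\<Sum>a\<in>A. g a l) = 0" by (intro sum.neutral) (simp add: g_def)
    then show ?thesis using dl by simp
  qed
qed

end

theorem mainTheorem1:
  fixes V :: "'a set" and E :: "'a set set" and M :: "'a set"
    and VB :: "'a set" and EB :: "'a set set"
  assumes "wf_graph V E"
    and "graph_conn V E"
    and "M \<subseteq> V"
    and "biconn_comp V E VB EB"
    and "l \<in> EB"
    and "\<not> (card (agents V E M VB EB) = 2 \<and> l = agents V E M VB EB)"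
  shows "identifiable V E M l \<longleftrightarrow> identifiable V E (M \<union> agents V E M VB EB) l"
proof -
  interpret setting V E M VB EB using assms(1-4) by unfold_locales
  show ?thesis
  proof
    assume idM: "identifiable V E M l"
    show "identifiable V E (M \<union> A) l"
      unfolding identifiable_def
    proof (intro allI impI)
      fix w1 w2 :: "'a set \<Rightarrow> real"
      assume h: "\<forall>p. meas_path V E (M \<union> A) p \<longrightarrow> measurement w1 p = measurement w2 p"
      have "\<forall>p. meas_path V E M p \<longrightarrow> measurement w1 p = measurement w2 p"
        using h by (auto simp: meas_path_def)
      then show "w1 l = w2 l" using idM unfolding identifiable_def by blast
    qed
  next
    assume idf: "identifiable V E (M \<union> A) l"
    show "identifiable V E M l"
      unfolding identifiable_def
    proof (intro allI impI)
      fix w1 w2 :: "'a set \<Rightarrow> real"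
      assume h: "\<forall>p. meas_path V E M p \<longrightarrow> measurement w1 p = measurement w2 p"
      have "\<forall>p. meas_path V E M p \<longrightarrow> measurement (\<lambda>e. w1 e - w2 e) p = 0"
        using h by (simp add: measurement_diff)
      then have "(\<lambda>e. w1 e - w2 e) l = 0" using hard_dir[OF idf assms(5,6)] by blast
      then show "w1 l = w2 l" by simp
    qed
  qed
qed


end
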